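(* Let $X$ be a compact metric space and $\mathcal C,\mathcal D\subseteq\mathcal P(X)$. Let $P^\nu_{\mathcal C}$ and $P^\nu_{\mathcal D}$ be the optimal derivation sequences for $\mathcal C$ and $\mathcal D$, and let $Q^\nu$ be the optimal derivation sequence for $\{C\cap D: C\in\mathcal C, D\in\mathcal D\}$. Then for all ordinals $\nu,\mu$, $Q^{\nu\#\mu}\subseteq P^\nu_{\mathcal C}\cup P^\mu_{\mathcal D}$.
   Context: Optimal derivation sequence: for $\mathcal C\subseteq\mathcal P(X)$, define $P^0=X$, $P^{\nu+1}=P^\nu\setminus\bigcup\{U\subseteq X \text{ open}: P^\nu\cap U\subseteq C\text{ for some }C\in\mathcal C\}$, and $P^\lambda=\bigcap_{\nu<\lambda}P^\nu$ for limit $\lambda$. Natural (Hessenberg) sum: if $\alpha$ and $\beta$ have Cantor normal forms with exponents among $\xi_1>\dots>\xi_r$, $\alpha=\sum_i\omega^{\xi_i}m_i$, $\beta=\sum_i\omega^{\xi_i}n_i$ ($m_i,n_i\in\mathbb N$), then $\alpha\#\beta=\sum_i\omega^{\xi_i}(m_i+n_i)$. *)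

theory Defs
  imports "HOL-Analysis.Analysis"
begin

text \<open>One derivation step for a family C of subsets of the whole space
(the space X is the universe of the type):
  P' = P minus the union of all open U with P \<inter> U \<subseteq> C for some C in the family.\<close>

definition deriv_step :: "'a::topological_space set set \<Rightarrow> 'a set \<Rightarrow> 'a set" where
  "deriv_step \<C> P = P - \<Union>{U. open U \<and> (\<exists>C\<in>\<C>. P \<inter> U \<subseteq> C)}"

text \<open>Ordinals are represented as elements of an arbitrary well-ordered type 'o.\<close>

definition is_least_ord :: "'o::wellorder \<Rightarrow> bool" where
  "is_least_ord \<nu> \<longleftrightarrow> (\<forall>\<mu>. \<not> \<mu> < \<nu>)"

definition is_succ_ord :: "'o::wellorder \<Rightarrow> bool" where
  "is_succ_ord \<nu> \<longleftrightarrow> (\<exists>\<mu><\<nu>. \<forall>\<rho><\<nu>. \<rho> \<le> \<mu>)"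

definition ord_pred :: "'o::wellorder \<Rightarrow> 'o" where
  "ord_pred \<nu> = (THE \<mu>. \<mu> < \<nu> \<and> (\<forall>\<rho><\<nu>. \<rho> \<le> \<mu>))"

definition opt_deriv_seq :: "'a::topological_space set set \<Rightarrow> 'o::wellorder \<Rightarrow> 'a set" where
  "opt_deriv_seq \<C> = wfrec {(x, y). x < y}
     (\<lambda>F \<nu>. if is_least_ord \<nu> then UNIV
            else if is_succ_ord \<nu> then deriv_step \<C> (F (ord_pred \<nu>))
            else (\<Inter>\<mu>\<in>{\<mu>. \<mu> < \<nu>}. F \<mu>))"

text \<open>Ordinal exponentiation omega^xi is the order type of the finitely supported
  functions xi -> nat (here: functions 'o => nat vanishing outside {..<xi}),
  ordered by comparing values at the largest argument where they differ.\<close>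

definition omega_pow_carrier :: "'o::wellorder \<Rightarrow> ('o \<Rightarrow> nat) set" where
  "omega_pow_carrier \<xi> = {f. finite {x. f x \<noteq> 0} \<and> (\<forall>x. \<not> x < \<xi> \<longrightarrow> f x = 0)}"

definition omega_pow_less :: "('o::wellorder \<Rightarrow> nat) \<Rightarrow> ('o \<Rightarrow> nat) \<Rightarrow> bool" where
  "omega_pow_less f g \<longleftrightarrow> (\<exists>x. f x < g x \<and> (\<forall>y. x < y \<longrightarrow> f y = g y))"

text \<open>The ordinal sum  omega^xi_0 * m_0 + omega^xi_1 * m_1 + ... + omega^xi_(r-1) * m_(r-1),
  given by the list [(xi_0, m_0), ...], is the order type of the set of triples
  (i, j, f) with i < r, j < m_i, f in omega^xi_i, ordered lexicographically
  (ordinal sum over i, then m_i copies of omega^xi_i).\<close>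

definition cnf_carrier :: "('o::wellorder \<times> nat) list \<Rightarrow> (nat \<times> nat \<times> ('o \<Rightarrow> nat)) set" where
  "cnf_carrier ts = {(i, j, f). i < length ts \<and> j < snd (ts ! i) \<and> f \<in> omega_pow_carrier (fst (ts ! i))}"

definition cnf_less :: "(nat \<times> nat \<times> ('o::wellorder \<Rightarrow> nat)) \<Rightarrow> (nat \<times> nat \<times> ('o \<Rightarrow> nat)) \<Rightarrow> bool" where
  "cnf_less a b \<longleftrightarrow> (case a of (i, j, f) \<Rightarrow> case b of (i', j', f') \<Rightarrow>
      i < i' \<or> (i = i' \<and> (j < j' \<or> (j = j' \<and> omega_pow_less f f'))))"

text \<open>nu equals the ordinal expression given by ts: the initial segment {..<nu}
  is order-isomorphic to the carrier above.\<close>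

definition cnf_value :: "'o::wellorder \<Rightarrow> ('o \<times> nat) list \<Rightarrow> bool" where
  "cnf_value \<nu> ts \<longleftrightarrow> (\<exists>h. bij_betw h {..<\<nu>} (cnf_carrier ts) \<and>
      (\<forall>x\<in>{..<\<nu>}. \<forall>y\<in>{..<\<nu>}. x < y \<longrightarrow> cnf_less (h x) (h y)))"

definition is_natural_sum :: "'o::wellorder \<Rightarrow> 'o \<Rightarrow> 'o \<Rightarrow> bool" where
  "is_natural_sum \<nu> \<mu> \<rho> \<longleftrightarrow> (\<exists>xs :: ('o \<times> nat \<times> nat) list.
      sorted_wrt (>) (map fst xs) \<and>
      cnf_value \<nu> (map (\<lambda>(\<xi>, m, n). (\<xi>, m)) xs) \<and>
      cnf_value \<mu> (map (\<lambda>(\<xi>, m, n). (\<xi>, n)) xs) \<and>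
      cnf_value \<rho> (map (\<lambda>(\<xi>, m, n). (\<xi>, m + n)) xs))"

end

theory Submission
  imports Defs
begin


definition pre :: "('o::wellorder \<times> nat) list \<Rightarrow> nat \<Rightarrow> 'o \<Rightarrow> nat" where
  "pre ts n x = (\<Sum>k<n. if fst (ts!k) = x then snd (ts!k) else 0)"

definition cval :: "('o::wellorder \<times> nat) list \<Rightarrow> nat \<times> nat \<times> ('o \<Rightarrow> nat) \<Rightarrow> 'o \<Rightarrow> nat" where
  "cval ts t x = (case t of (i, j, f) \<Rightarrow> pre ts i x + (if fst (ts!i) = x then j else 0) + f x)"

abbreviation opl where "opl \<equiv> omega_pow_less"

lemma opl_trans: assumes "opl f g" "opl g h" shows "opl f h"
proof -
  obtain x where x: "f x < g x" "\<forall>y. x < y \<longrightarrow> f y = g y" using assms(1) unfolding omega_pow_less_def by blast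
  obtain z where z: "g z < h z" "\<forall>y. z < y \<longrightarrow> g y = h y" using assms(2) unfolding omega_pow_less_def by blast
  show ?thesis unfolding omega_pow_less_def
  proof (cases x z rule: linorder_cases)
    case less
    then show "\<exists>x. f x < h x \<and> (\<forall>y>x. f y = h y)" using x z by (metis order.strict_trans)
  next
    case equal
    then show "\<exists>x. f x < h x \<and> (\<forall>y>x. f y = h y)" using x z by (metis order.strict_trans)
  next
    case greater
    then show "\<exists>x. f x < h x \<and> (\<forall>y>x. f y = h y)" using x z by (metis order.strict_trans)
  qed
qed

lemma opl_intro: "F x < G x \<Longrightarrow> (\<forall>y>x. F y = G y) \<Longrightarrow> opl F G"
  unfolding omega_pow_less_def by blast

lemma opl_irrefl: "\<not> opl f f" by (simp add: omega_pow_less_def)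

lemma opl_add1: "opl f f' \<Longrightarrow> opl (\<lambda>x. f x + g x) (\<lambda>x. f' x + g x)"
  by (auto simp: omega_pow_less_def)

lemma opl_add2: "opl f f' \<Longrightarrow> opl (\<lambda>x. g x + f x) (\<lambda>x. g x + f' x)"
  by (auto simp: omega_pow_less_def)

lemma srt: fixes ts :: "('o::wellorder \<times> 'b) list"
  assumes s: "sorted_wrt (>) (map fst ts)" and kl: "k < l" and l: "l < length ts"
  shows "fst (ts!l) < fst (ts!k)"
proof -
  have l': "l < length (map fst ts)" using l by simp
  have k: "k < length ts" using kl l by simp
  from sorted_wrt_nth_less[OF s kl l'] have "map fst ts ! l < map fst ts ! k" .
  thus ?thesis using k l by (simp only: nth_map)
qed

lemma srt_le: fixes ts :: "('o::wellorder \<times> 'b) list"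
  assumes s: "sorted_wrt (>) (map fst ts)" and kl: "k \<le> l" and l: "l < length ts"
  shows "fst (ts!l) \<le> fst (ts!k)"
proof (cases "k = l")
  case False
  hence "k < l" using kl by simp
  from srt[OF s this l] show ?thesis by simp
qed simp

lemma srt_inj: fixes ts :: "('o::wellorder \<times> 'b) list"
  assumes s: "sorted_wrt (>) (map fst ts)" and k: "k < length ts" and i: "i < length ts"
  shows "fst (ts!k) = fst (ts!i) \<longleftrightarrow> k = i"
proof
  assume e: "fst (ts!k) = fst (ts!i)"
  show "k = i"
  proof (rule ccontr)
    assume "k \<noteq> i"
    hence "k < i \<or> i < k" by arith
    thus False
    proof
      assume "k < i" from srt[OF s this i] e show False by simp
    next
      assume "i < k" from srt[OF s this k] e show False by simp
    qed
  qed
qed simp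

lemma pre_notin: "(\<forall>k<n. fst (ts!k) \<noteq> x) \<Longrightarrow> pre ts n x = 0"
  unfolding pre_def by simp

lemma pre_nz: assumes "pre ts n x \<noteq> 0" shows "\<exists>k<n. fst (ts!k) = x"
proof (rule ccontr)
  assume "\<not> (\<exists>k<n. fst (ts!k) = x)"
  hence "\<forall>k<n. fst (ts!k) \<noteq> x" by simp
  hence "pre ts n x = 0" by (rule pre_notin)
  thus False using assms by simp
qed

lemma pre_Suc: "pre ts (Suc n) x = pre ts n x + (if fst (ts!n) = x then snd (ts!n) else 0)"
  unfolding pre_def by simp

lemma pre_above_d: "(\<forall>k. n \<le> k \<and> k < n + d \<longrightarrow> fst (ts!k) \<noteq> x) \<Longrightarrow> pre ts (n+d) x = pre ts n x"
  by (induction d) (auto simp: pre_Suc)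

lemma pre_above: "n \<le> n' \<Longrightarrow> (\<forall>k. n \<le> k \<and> k < n' \<longrightarrow> fst (ts!k) \<noteq> x) \<Longrightarrow> pre ts n' x = pre ts n x"
  using pre_above_d[of n "n' - n" ts x] by simp

lemma pre_above2:
  assumes s: "sorted_wrt (>) (map fst ts)" and "i \<le> n" "n \<le> length ts" "i < length ts" "fst (ts!i) < y"
  shows "pre ts n y = pre ts i y"
proof (rule pre_above)
  show "\<forall>k. i \<le> k \<and> k < n \<longrightarrow> fst (ts!k) \<noteq> y"
  proof (intro allI impI)
    fix k assume k: "i \<le> k \<and> k < n"
    have "fst (ts!k) \<le> fst (ts!i)" using srt_le[OF s, of i k] k assms(3) by simp
    thus "fst (ts!k) \<noteq> y" using assms(5) by simp
  qed
qed (use assms in auto)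

lemma pre_at:
  assumes s: "sorted_wrt (>) (map fst ts)" and i: "i < length ts" and n: "n \<le> length ts"
  shows "pre ts n (fst (ts!i)) = (if i < n then snd (ts!i) else 0)"
proof -
  have "pre ts n (fst (ts!i)) = (\<Sum>k<n. if k = i then snd (ts!k) else 0)"
    unfolding pre_def
    by (rule sum.cong) (use srt_inj[OF s _ i] n in auto)
  also have "\<dots> = (if i < n then snd (ts!i) else 0)" by simp
  finally show ?thesis .
qed

lemma cv_above: "f \<in> omega_pow_carrier (fst (ts!i)) \<Longrightarrow> fst (ts!i) < y \<Longrightarrow> cval ts (i, j, f) y = pre ts i y"
  unfolding cval_def omega_pow_carrier_def by auto

lemma cv_at: "sorted_wrt (>) (map fst ts) \<Longrightarrow> i < length ts \<Longrightarrow> f \<in> omega_pow_carrier (fst (ts!i)) \<Longrightarrow>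
   cval ts (i, j, f) (fst (ts!i)) = j"
  unfolding cval_def omega_pow_carrier_def using pre_at[of ts i i] by auto

lemma carrierD: "(i, j, f) \<in> cnf_carrier ts \<Longrightarrow> i < length ts \<and> j < snd (ts!i) \<and> f \<in> omega_pow_carrier (fst (ts!i))"
  unfolding cnf_carrier_def by auto

lemma cval_mono:
  assumes s: "sorted_wrt (>) (map fst ts)" and t: "t \<in> cnf_carrier ts" and t': "t' \<in> cnf_carrier ts"
    and lt: "cnf_less t t'"
  shows "opl (cval ts t) (cval ts t')"
proof -
  obtain i j f where tt: "t = (i, j, f)" by (cases t) auto
  obtain i' j' f' where tt': "t' = (i', j', f')" by (cases t') auto
  note c = carrierD[OF t[unfolded tt]]
  note c' = carrierD[OF t'[unfolded tt']]
  have lt': "i < i' \<or> (i = i' \<and> (j < j' \<or> (j = j' \<and> opl f f')))"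
    using lt unfolding tt tt' cnf_less_def by simp
  show ?thesis unfolding tt tt'
  proof (cases "i < i'")
    case True
    have ii: "fst (ts!i') < fst (ts!i)" using srt[OF s True] c' by simp
    have f'0: "\<And>y. \<not> y < fst (ts!i') \<Longrightarrow> f' y = 0" using c' unfolding omega_pow_carrier_def by auto
    have "cval ts (i', j', f') (fst (ts!i)) = pre ts i' (fst (ts!i))"
      by (rule cv_above[OF _ ii]) (use c' in auto)
    also have "\<dots> = snd (ts!i)" using pre_at[OF s, of i i'] c c' True by simp
    finally have a: "cval ts (i', j', f') (fst (ts!i)) = snd (ts!i)" .
    have b: "cval ts (i, j, f) (fst (ts!i)) = j" using cv_at[OF s] c by auto
    have "\<forall>y>fst (ts!i). cval ts (i, j, f) y = cval ts (i', j', f') y"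
    proof (intro allI impI)
      fix y assume y: "fst (ts!i) < y"
      have "cval ts (i', j', f') y = pre ts i' y" using cv_above[of f' ts i' y] c' ii y by auto
      also have "\<dots> = pre ts i y" using pre_above2[OF s, of i i' y] c c' True y by auto
      also have "\<dots> = cval ts (i, j, f) y" using cv_above[of f ts i y] c y by auto
      finally show "cval ts (i, j, f) y = cval ts (i', j', f') y" by simp
    qed
    moreover have "cval ts (i, j, f) (fst (ts!i)) < cval ts (i', j', f') (fst (ts!i))"
      using a b c by simp
    ultimately show "opl (cval ts (i, j, f)) (cval ts (i', j', f'))"
      by (intro opl_intro)
  next
    case False
    hence ii: "i' = i" using lt' by auto
    show "opl (cval ts (i, j, f)) (cval ts (i', j', f'))"
    proof (cases "j < j'")
      case True
      have "\<forall>y>fst (ts!i). cval ts (i, j, f) y = cval ts (i', j', f') y"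
        using cv_above[of f ts i] cv_above[of f' ts i] c c' ii by auto
      moreover have "cval ts (i, j, f) (fst (ts!i)) < cval ts (i', j', f') (fst (ts!i))"
        using cv_at[OF s, of i f j] cv_at[OF s, of i f' j'] c c' ii True by simp
      ultimately show ?thesis by (intro opl_intro)
    next
      case False
      hence jj: "j' = j" "opl f f'" using lt' \<open>\<not> i < i'\<close> by auto
      then obtain x where x: "f x < f' x" "\<forall>y>x. f y = f' y" unfolding omega_pow_less_def by blast
      have "\<forall>y>x. cval ts (i, j, f) y = cval ts (i', j', f') y"
        using x ii jj unfolding cval_def by simp
      moreover have "cval ts (i, j, f) x < cval ts (i', j', f') x"
        using x ii jj unfolding cval_def by simp
      ultimately show ?thesis by (intro opl_intro)
    qed
  qed
qed

lemma cval_lt_top: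
  assumes s: "sorted_wrt (>) (map fst ts)" and t: "t \<in> cnf_carrier ts"
  shows "opl (cval ts t) (pre ts (length ts))"
proof -
  obtain i j f where tt: "t = (i, j, f)" by (cases t) auto
  note c = carrierD[OF t[unfolded tt]]
  have "\<forall>y>fst (ts!i). cval ts (i, j, f) y = pre ts (length ts) y"
    using cv_above[of f ts i] pre_above2[OF s, of i "length ts"] c by auto
  moreover have "cval ts (i, j, f) (fst (ts!i)) < pre ts (length ts) (fst (ts!i))"
    using cv_at[OF s, of i f j] pre_at[OF s, of i "length ts"] c by auto
  ultimately show ?thesis unfolding tt by (intro opl_intro)
qed

lemma cval_fs:
  assumes t: "t \<in> cnf_carrier ts"
  shows "finite {x. cval ts t x \<noteq> 0}"
proof -
  obtain i j f where tt: "t = (i, j, f)" by (cases t) auto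
  note c = carrierD[OF t[unfolded tt]]
  have "{x. cval ts t x \<noteq> 0} \<subseteq> fst ` set ts \<union> {x. f x \<noteq> 0}"
  proof
    fix x assume x: "x \<in> {x. cval ts t x \<noteq> 0}"
    show "x \<in> fst ` set ts \<union> {x. f x \<noteq> 0}"
    proof (cases "pre ts i x = 0")
      case True
      show ?thesis
      proof (cases "fst (ts!i) = x")
        case True2: True
        have "fst (ts!i) \<in> fst ` set ts" using c by (intro imageI nth_mem) simp
        then show ?thesis unfolding True2 by (rule UnI1)
      next
        case False2: False
        have "cval ts t x = pre ts i x + (if fst (ts!i) = x then j else 0) + f x"
          unfolding tt cval_def by simp
        also have "\<dots> = f x" using True False2 by simp
        finally have "cval ts t x = f x" .
        moreover have "cval ts t x \<noteq> 0" using x by simp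
        ultimately have "f x \<noteq> 0" by simp
        then show ?thesis by (intro UnI2 CollectI)
      qed
    next
      case False
      then obtain k where "k < i" "fst (ts!k) = x" using pre_nz by blast
      moreover have "k < length ts" using \<open>k < i\<close> c by simp
      moreover have "fst (ts!k) \<in> fst ` set ts" using \<open>k < length ts\<close> by (intro imageI nth_mem)
      ultimately have "x \<in> fst ` set ts" by simp
      then show ?thesis by (rule UnI1)
    qed
  qed
  moreover have "finite (fst ` set ts \<union> {x. f x \<noteq> 0})" using c unfolding omega_pow_carrier_def by auto
  ultimately show ?thesis by (rule finite_subset)
qed

lemma cval_surj:
  assumes s: "sorted_wrt (>) (map fst ts)" and fin: "finite {x. F x \<noteq> 0}"
    and lt: "opl F (pre ts (length ts))"
  shows "\<exists>t\<in>cnf_carrier ts. cval ts t = F"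
proof -
  obtain x where x: "F x < pre ts (length ts) x" "\<forall>y>x. F y = pre ts (length ts) y"
    using lt unfolding omega_pow_less_def by blast
  hence "pre ts (length ts) x \<noteq> 0" by simp
  then obtain i where i: "i < length ts" "fst (ts!i) = x" using pre_nz by blast
  define f where "f = (\<lambda>y. if y < x then F y else 0)"
  have fc: "f \<in> omega_pow_carrier (fst (ts!i))"
    unfolding omega_pow_carrier_def f_def using i
    by (auto intro: finite_subset[OF _ fin])
  have jl: "F x < snd (ts!i)" using x(1) pre_at[OF s i(1), of "length ts"] i by simp
  have tc: "(i, F x, f) \<in> cnf_carrier ts" unfolding cnf_carrier_def using i jl fc by auto
  have "cval ts (i, F x, f) = F"
  proof
    fix y
    show "cval ts (i, F x, f) y = F y"
    proof (cases y x rule: linorder_cases)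
      case less
      have "pre ts i y = 0"
      proof (rule pre_notin, intro allI impI)
        fix k assume "k < i"
        from srt[OF s this i(1)] i(2) less show "fst (ts!k) \<noteq> y" by simp
      qed
      then show ?thesis unfolding cval_def f_def using less i by auto
    next
      case equal
      then show ?thesis using cv_at[OF s i(1) fc, of "F x"] i by simp
    next
      case greater
      have "cval ts (i, F x, f) y = pre ts i y" using cv_above[OF fc] greater i by simp
      also have "\<dots> = pre ts (length ts) y" using pre_above2[OF s, of i "length ts" y] i greater by simp
      also have "\<dots> = F y" using x greater by simp
      finally show ?thesis .
    qed
  qed
  then show ?thesis using tc by blast
qed

lemma pre_add:
  "pre (map (\<lambda>(\<xi>, m, n). (\<xi>, m)) xs) N y + pre (map (\<lambda>(\<xi>, m, n). (\<xi>, n)) xs) N y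
   = pre (map (\<lambda>(\<xi>, m, n). (\<xi>, m + n)) xs) N y" if "N \<le> length xs"
  unfolding pre_def sum.distrib[symmetric]
  by (rule sum.cong) (use that in \<open>auto simp: split_beta\<close>)

lemma from_value:
  assumes v: "cnf_value \<nu> ts" and s: "sorted_wrt (>) (map fst ts)"
  shows "\<exists>\<psi>. (\<forall>a<\<nu>. finite {x. \<psi> a x \<noteq> 0} \<and> opl (\<psi> a) (pre ts (length ts))) \<and>
             (\<forall>a a'. a < a' \<longrightarrow> a' < \<nu> \<longrightarrow> opl (\<psi> a) (\<psi> a'))"
proof -
  obtain h where h: "bij_betw h {..<\<nu>} (cnf_carrier ts)"
    "\<forall>x\<in>{..<\<nu>}. \<forall>y\<in>{..<\<nu>}. x < y \<longrightarrow> cnf_less (h x) (h y)"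
    using v unfolding cnf_value_def by blast
  have hc: "\<And>a. a < \<nu> \<Longrightarrow> h a \<in> cnf_carrier ts" using h(1) by (auto dest: bij_betwE)
  show ?thesis
  proof (rule exI[of _ "\<lambda>a. cval ts (h a)"], intro conjI allI impI)
    fix a assume "a < \<nu>"
    hence ha: "h a \<in> cnf_carrier ts" by (rule hc)
    show "finite {x. cval ts (h a) x \<noteq> 0}" using ha by (rule cval_fs)
    show "opl (cval ts (h a)) (pre ts (length ts))" using s ha by (rule cval_lt_top)
  next
    fix a a' assume aa: "a < a'" "a' < \<nu>"
    have an: "a < \<nu>" using aa by simp
    have "cnf_less (h a) (h a')" using h(2) an aa by simp
    then show "opl (cval ts (h a)) (cval ts (h a'))"
      using cval_mono[OF s hc[OF an] hc[OF aa(2)]] by simp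
  qed
qed

lemma to_value:
  assumes v: "cnf_value \<rho> ts" and s: "sorted_wrt (>) (map fst ts)"
  shows "\<exists>\<psi>. (\<forall>F. finite {x. F x \<noteq> 0} \<and> opl F (pre ts (length ts)) \<longrightarrow> \<psi> F < \<rho>) \<and>
         (\<forall>F F'. finite {x. F x \<noteq> 0} \<and> opl F (pre ts (length ts)) \<longrightarrow>
                 finite {x. F' x \<noteq> 0} \<and> opl F' (pre ts (length ts)) \<longrightarrow> opl F F' \<longrightarrow> \<psi> F < \<psi> F')"
proof -
  obtain h where h: "bij_betw h {..<\<rho>} (cnf_carrier ts)"
    "\<forall>x\<in>{..<\<rho>}. \<forall>y\<in>{..<\<rho>}. x < y \<longrightarrow> cnf_less (h x) (h y)"
    using v unfolding cnf_value_def by blast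
  define T where "T F = (SOME t. t \<in> cnf_carrier ts \<and> cval ts t = F)" for F
  define \<psi> where "\<psi> F = inv_into {..<\<rho>} h (T F)" for F
  have P: "\<psi> F < \<rho> \<and> h (\<psi> F) \<in> cnf_carrier ts \<and> cval ts (h (\<psi> F)) = F"
    if "finite {x. F x \<noteq> 0}" "opl F (pre ts (length ts))" for F
  proof -
    have ex: "\<exists>t. t \<in> cnf_carrier ts \<and> cval ts t = F" using cval_surj[OF s that] by blast
    have T: "T F \<in> cnf_carrier ts" "cval ts (T F) = F" unfolding T_def using someI_ex[OF ex] by simp_all
    have im: "T F \<in> h ` {..<\<rho>}" using h(1) T(1) by (simp add: bij_betw_def)
    have "\<psi> F \<in> {..<\<rho>}" unfolding \<psi>_def by (rule inv_into_into[OF im])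
    moreover have "h (\<psi> F) = T F" unfolding \<psi>_def by (rule f_inv_into_f[OF im])
    ultimately show ?thesis using T by simp
  qed
  show ?thesis
  proof (rule exI[of _ \<psi>], intro conjI allI impI)
    fix F assume "finite {x. F x \<noteq> 0} \<and> opl F (pre ts (length ts))"
    then show "\<psi> F < \<rho>" using P by blast
  next
    fix F F'
    assume a: "finite {x. F x \<noteq> 0} \<and> opl F (pre ts (length ts))"
      and b: "finite {x. F' x \<noteq> 0} \<and> opl F' (pre ts (length ts))" and ff: "opl F F'"
    have PF: "\<psi> F < \<rho>" "h (\<psi> F) \<in> cnf_carrier ts" "cval ts (h (\<psi> F)) = F"
      using P[of F] a by auto
    have PF': "\<psi> F' < \<rho>" "h (\<psi> F') \<in> cnf_carrier ts" "cval ts (h (\<psi> F')) = F'"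
      using P[of F'] b by auto
    show "\<psi> F < \<psi> F'"
    proof (rule ccontr)
      assume "\<not> \<psi> F < \<psi> F'"
      hence "\<psi> F' < \<psi> F \<or> \<psi> F' = \<psi> F" by auto
      thus False
      proof
        assume l: "\<psi> F' < \<psi> F"
        have "cnf_less (h (\<psi> F')) (h (\<psi> F))" using h(2) l PF(1) PF'(1) by simp
        hence "opl (cval ts (h (\<psi> F'))) (cval ts (h (\<psi> F)))" by (rule cval_mono[OF s PF'(2) PF(2)])
        hence "opl F' F" using PF(3) PF'(3) by simp
        thus False using opl_trans[OF ff] opl_irrefl by blast
      next
        assume "\<psi> F' = \<psi> F"
        hence "cval ts (h (\<psi> F')) = cval ts (h (\<psi> F))" by simp
        hence "F' = F" using PF(3) PF'(3) by simp
        hence "opl F F" using ff by simp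
        thus False using opl_irrefl by blast
      qed
    qed
  qed
qed

lemma sorted_map:
  assumes s: "sorted_wrt (>) (map fst xs)"
  shows "sorted_wrt (>) (map fst (map (\<lambda>(\<xi>, m, n). (\<xi>, g m n)) xs))"
proof -
  have e: "fst \<circ> (\<lambda>(\<xi>, m, n). (\<xi>, g m n)) = fst" by (simp add: fun_eq_iff split_beta)
  have eq: "map fst (map (\<lambda>(\<xi>, m, n). (\<xi>, g m n)) xs) = map fst xs" by (simp only: map_map e)
  show ?thesis unfolding eq by (rule s)
qed

lemma phi_exists:
  fixes \<nu> \<mu> \<rho> :: "'o::wellorder"
  assumes "is_natural_sum \<nu> \<mu> \<rho>"
  shows "\<exists>\<phi>. (\<forall>a a' b. a < a' \<longrightarrow> a' < \<nu> \<longrightarrow> b < \<mu> \<longrightarrow> \<phi> a b < \<phi> a' b) \<and>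
             (\<forall>a b b'. a < \<nu> \<longrightarrow> b < b' \<longrightarrow> b' < \<mu> \<longrightarrow> \<phi> a b < \<phi> a b') \<and>
             (\<forall>a b. a < \<nu> \<longrightarrow> b < \<mu> \<longrightarrow> \<phi> a b < \<rho>)"
proof -
  obtain xs :: "('o \<times> nat \<times> nat) list" where xs: "sorted_wrt (>) (map fst xs)"
      "cnf_value \<nu> (map (\<lambda>(\<xi>, m, n). (\<xi>, m)) xs)"
      "cnf_value \<mu> (map (\<lambda>(\<xi>, m, n). (\<xi>, n)) xs)"
      "cnf_value \<rho> (map (\<lambda>(\<xi>, m, n). (\<xi>, m + n)) xs)"
    using assms unfolding is_natural_sum_def by blast
  define t1 where "t1 = map (\<lambda>(\<xi>, m, n). (\<xi>, m)) xs"
  define t2 where "t2 = map (\<lambda>(\<xi>, m, n). (\<xi>, n)) xs"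
  define t3 where "t3 = map (\<lambda>(\<xi>, m, n). (\<xi>, m + n)) xs"
  have s1: "sorted_wrt (>) (map fst t1)" unfolding t1_def using sorted_map[OF xs(1), of "\<lambda>m n. m"] by simp
  have s2: "sorted_wrt (>) (map fst t2)" unfolding t2_def using sorted_map[OF xs(1), of "\<lambda>m n. n"] by simp
  have s3: "sorted_wrt (>) (map fst t3)" unfolding t3_def using sorted_map[OF xs(1), of "\<lambda>m n. m + n"] by simp
  obtain \<psi>1 where p1: "\<forall>a<\<nu>. finite {x. \<psi>1 a x \<noteq> 0} \<and> opl (\<psi>1 a) (pre t1 (length t1))"
      "\<forall>a a'. a < a' \<longrightarrow> a' < \<nu> \<longrightarrow> opl (\<psi>1 a) (\<psi>1 a')"
    using from_value[OF xs(2)[folded t1_def] s1] by blast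
  obtain \<psi>2 where p2: "\<forall>a<\<mu>. finite {x. \<psi>2 a x \<noteq> 0} \<and> opl (\<psi>2 a) (pre t2 (length t2))"
      "\<forall>a a'. a < a' \<longrightarrow> a' < \<mu> \<longrightarrow> opl (\<psi>2 a) (\<psi>2 a')"
    using from_value[OF xs(3)[folded t2_def] s2] by blast
  obtain \<psi>3 where p3: "\<forall>F. finite {x. F x \<noteq> 0} \<and> opl F (pre t3 (length t3)) \<longrightarrow> \<psi>3 F < \<rho>"
     "\<forall>F F'. finite {x. F x \<noteq> 0} \<and> opl F (pre t3 (length t3)) \<longrightarrow>
                 finite {x. F' x \<noteq> 0} \<and> opl F' (pre t3 (length t3)) \<longrightarrow> opl F F' \<longrightarrow> \<psi>3 F < \<psi>3 F'"
    using to_value[OF xs(4)[folded t3_def] s3] by blast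
  have top: "pre t3 (length t3) = (\<lambda>y. pre t1 (length t1) y + pre t2 (length t2) y)"
    unfolding t1_def t2_def t3_def using pre_add[of "length xs" xs] by auto
  define G where "G a b = (\<lambda>y. \<psi>1 a y + \<psi>2 b y)" for a b
  have Gok: "finite {x. G a b x \<noteq> 0} \<and> opl (G a b) (pre t3 (length t3))" if "a < \<nu>" "b < \<mu>" for a b
  proof
    have "{x. G a b x \<noteq> 0} \<subseteq> {x. \<psi>1 a x \<noteq> 0} \<union> {x. \<psi>2 b x \<noteq> 0}" unfolding G_def by auto
    thus "finite {x. G a b x \<noteq> 0}" using p1 p2 that by (auto intro: finite_subset)
    have "opl (G a b) (\<lambda>y. pre t1 (length t1) y + \<psi>2 b y)" unfolding G_def
      using opl_add1 p1 that by blast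
    moreover have "opl (\<lambda>y. pre t1 (length t1) y + \<psi>2 b y) (pre t3 (length t3))" unfolding top
      using opl_add2 p2 that by blast
    ultimately show "opl (G a b) (pre t3 (length t3))" by (rule opl_trans)
  qed
  show ?thesis
  proof (rule exI[of _ "\<lambda>a b. \<psi>3 (G a b)"], intro conjI allI impI)
    fix a a' b assume "a < a'" "a' < \<nu>" "b < \<mu>"
    moreover have "opl (G a b) (G a' b)" unfolding G_def using opl_add1 p1 calculation by blast
    ultimately show "\<psi>3 (G a b) < \<psi>3 (G a' b)" using p3(2) Gok[of a b] Gok[of a' b] by simp
  next
    fix a b b' assume "a < \<nu>" "b < b'" "b' < \<mu>"
    moreover have "opl (G a b) (G a b')" unfolding G_def using opl_add2 p2 calculation by blast
    ultimately show "\<psi>3 (G a b) < \<psi>3 (G a b')" using p3(2) Gok[of a b] Gok[of a b'] by simp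
  next
    fix a b assume "a < \<nu>" "b < \<mu>"
    then show "\<psi>3 (G a b) < \<rho>" using p3(1) Gok by blast
  qed
qed




lemma ods_unfold:
  "opt_deriv_seq \<C> \<nu> = (if is_least_ord \<nu> then UNIV
            else if is_succ_ord \<nu> then deriv_step \<C> (opt_deriv_seq \<C> (ord_pred \<nu>))
            else (\<Inter>\<mu>\<in>{\<mu>. \<mu> < \<nu>}. opt_deriv_seq \<C> \<mu>))"
proof -
  have wf: "wf {(x, y). x < (y::'b::wellorder)}" by (rule wf)
  have pred: "is_succ_ord \<nu> \<Longrightarrow> ord_pred \<nu> < \<nu> \<and> (\<forall>\<rho><\<nu>. \<rho> \<le> ord_pred \<nu>)"
    unfolding ord_pred_def is_succ_ord_def
    by (rule theI') (metis antisym_conv)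
  show ?thesis
    unfolding opt_deriv_seq_def
    apply (subst wfrec[OF wf])
    using pred by (auto simp: cut_apply)
qed

lemma ord_pred_prop: "is_succ_ord \<nu> \<Longrightarrow> ord_pred \<nu> < \<nu> \<and> (\<forall>\<rho><\<nu>. \<rho> \<le> ord_pred \<nu>)"
    unfolding ord_pred_def is_succ_ord_def
    by (rule theI') (metis antisym_conv)

lemma ods_least: "is_least_ord \<nu> \<Longrightarrow> opt_deriv_seq \<C> \<nu> = UNIV"
  by (subst ods_unfold) simp

lemma ods_succ: "\<not> is_least_ord \<nu> \<Longrightarrow> is_succ_ord \<nu> \<Longrightarrow>
   opt_deriv_seq \<C> \<nu> = deriv_step \<C> (opt_deriv_seq \<C> (ord_pred \<nu>))"
  by (subst ods_unfold) simp

lemma ods_lim: "\<not> is_least_ord \<nu> \<Longrightarrow> \<not> is_succ_ord \<nu> \<Longrightarrow>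
   opt_deriv_seq \<C> \<nu> = (\<Inter>\<mu>\<in>{\<mu>. \<mu> < \<nu>}. opt_deriv_seq \<C> \<mu>)"
  by (subst ods_unfold) simp

lemma lim_between: "\<not> is_succ_ord \<nu> \<Longrightarrow> a < \<nu> \<Longrightarrow> \<exists>c. a < c \<and> c < (\<nu>::'o::wellorder)"
  unfolding is_succ_ord_def by (meson not_le)

lemma step_sub: "deriv_step \<C> P \<subseteq> P"
  unfolding deriv_step_def by auto

lemma step_mono: assumes "P \<subseteq> P'" shows "deriv_step \<C> P \<subseteq> deriv_step \<C> P'"
proof
  fix x assume x: "x \<in> deriv_step \<C> P"
  hence xP: "x \<in> P" and xn: "\<And>U C. open U \<Longrightarrow> C \<in> \<C> \<Longrightarrow> P \<inter> U \<subseteq> C \<Longrightarrow> x \<notin> U"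
    unfolding deriv_step_def by auto
  have "x \<notin> U" if "open U" "C \<in> \<C>" "P' \<inter> U \<subseteq> C" for U C
    using xn[OF that(1,2)] that(3) assms by blast
  thus "x \<in> deriv_step \<C> P'" using xP assms unfolding deriv_step_def by auto
qed

lemma step_closed: "closed P \<Longrightarrow> closed (deriv_step \<C> P)"
  unfolding deriv_step_def by (intro closed_Diff open_Union) auto

lemma ods_closed: "closed (opt_deriv_seq \<C> (a::'o::wellorder))"
proof (induction a rule: less_induct)
  case (less a)
  show ?case
    apply (subst ods_unfold)
    using less ord_pred_prop[of a] by (auto intro!: step_closed)
qed

lemma ods_anti: "(a::'o::wellorder) \<le> b \<Longrightarrow> opt_deriv_seq \<C> b \<subseteq> opt_deriv_seq \<C> a"
proof (induction b rule: less_induct)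
  case (less b)
  show ?case
  proof (cases "a = b")
    case False
    hence ab: "a < b" using less.prems by simp
    hence nl: "\<not> is_least_ord b" unfolding is_least_ord_def by auto
    show ?thesis
    proof (cases "is_succ_ord b")
      case True
      note p = ord_pred_prop[OF True]
      have "opt_deriv_seq \<C> b \<subseteq> opt_deriv_seq \<C> (ord_pred b)"
        by (simp add: ods_succ[OF nl True] step_sub)
      also have "\<dots> \<subseteq> opt_deriv_seq \<C> a" using less.IH p ab by auto
      finally show ?thesis .
    next
      case False
      show ?thesis using ods_lim[OF nl False] ab by auto
    qed
  qed simp
qed

lemma ods_step: "(a::'o::wellorder) < b \<Longrightarrow> opt_deriv_seq \<C> b \<subseteq> deriv_step \<C> (opt_deriv_seq \<C> a)"
proof (induction b rule: less_induct)
  case (less b)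
  hence nl: "\<not> is_least_ord b" unfolding is_least_ord_def by auto
  show ?case
  proof (cases "is_succ_ord b")
    case True
    note p = ord_pred_prop[OF True]
    show ?thesis using ods_succ[OF nl True] p less.prems
      by (metis step_mono ods_anti)
  next
    case False
    obtain c where c: "a < c" "c < b" using lim_between[OF False less.prems] by blast
    have "opt_deriv_seq \<C> b \<subseteq> opt_deriv_seq \<C> c" using ods_lim[OF nl False] c by auto
    also have "\<dots> \<subseteq> deriv_step \<C> (opt_deriv_seq \<C> a)" using less.IH c by auto
    finally show ?thesis .
  qed
qed

lemma ods_leave: "x \<notin> opt_deriv_seq \<C> (a::'o::wellorder) \<Longrightarrow> \<exists>a'<a. x \<notin> deriv_step \<C> (opt_deriv_seq \<C> a')"
proof (induction a rule: less_induct)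
  case (less a)
  have nl: "\<not> is_least_ord a"
  proof
    assume "is_least_ord a"
    then have "opt_deriv_seq \<C> a = UNIV" by (rule ods_least)
    with less.prems show False by simp
  qed
  show ?case
  proof (cases "is_succ_ord a")
    case True
    then show ?thesis using ods_succ[OF nl True] ord_pred_prop[OF True] less.prems by auto
  next
    case False
    then obtain c where "c < a" "x \<notin> opt_deriv_seq \<C> c" using ods_lim[OF nl False] less.prems by auto
    then show ?thesis using less.IH by (meson order.strict_trans)
  qed
qed

lemma claim:
  fixes \<phi> :: "'o::wellorder \<Rightarrow> 'o \<Rightarrow> 'o" and \<C> \<D> \<Q> :: "'a::topological_space set set"
  assumes m1: "\<And>a a' b. a < a' \<Longrightarrow> a' < \<nu> \<Longrightarrow> b < \<mu> \<Longrightarrow> \<phi> a b < \<phi> a' b"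
    and m2: "\<And>a b b'. a < \<nu> \<Longrightarrow> b < b' \<Longrightarrow> b' < \<mu> \<Longrightarrow> \<phi> a b < \<phi> a b'"
    and hQ: "\<And>C D. C \<in> \<C> \<Longrightarrow> D \<in> \<D> \<Longrightarrow> C \<inter> D \<in> \<Q>"
  shows "a < \<nu> \<Longrightarrow> b < \<mu> \<Longrightarrow>
    deriv_step \<Q> (opt_deriv_seq \<Q> (\<phi> a b))
     \<subseteq> deriv_step \<C> (opt_deriv_seq \<C> a) \<union> deriv_step \<D> (opt_deriv_seq \<D> b)"
proof (induction a arbitrary: b rule: less_induct)
  case (less a)
  note IHa = less.IH
  have an: "a < \<nu>" using less.prems by auto
  have main: "b < \<mu> \<Longrightarrow> deriv_step \<Q> (opt_deriv_seq \<Q> (\<phi> a b))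
     \<subseteq> deriv_step \<C> (opt_deriv_seq \<C> a) \<union> deriv_step \<D> (opt_deriv_seq \<D> b)" for b
  proof (induction b rule: less_induct)
    case (less b)
    note IHb = less.IH
    have bm: "b < \<mu>" by fact
    define SQ where "SQ = opt_deriv_seq \<Q> (\<phi> a b)"
    define SC where "SC = opt_deriv_seq \<C> a"
    define SD where "SD = opt_deriv_seq \<D> b"
    have A: "SQ - SC \<subseteq> deriv_step \<D> SD"
    proof
      fix z assume z: "z \<in> SQ - SC"
      hence "z \<notin> opt_deriv_seq \<C> a" unfolding SC_def by simp
      from ods_leave[OF this] obtain a' where a': "a' < a" "z \<notin> deriv_step \<C> (opt_deriv_seq \<C> a')"
        by blast
      have a'n: "a' < \<nu>" using a' an by simp
      have lt: "\<phi> a' b < \<phi> a b" using m1[OF a'(1) an bm] .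
      have zq: "z \<in> deriv_step \<Q> (opt_deriv_seq \<Q> (\<phi> a' b))"
        using subsetD[OF ods_step[where \<C>=\<Q>, OF lt]] z unfolding SQ_def by simp
      show "z \<in> deriv_step \<D> SD" using subsetD[OF IHa[OF a'(1) a'n bm] zq] a'(2) unfolding SD_def by simp
    qed
    have B: "SQ - SD \<subseteq> deriv_step \<C> SC"
    proof
      fix z assume z: "z \<in> SQ - SD"
      hence "z \<notin> opt_deriv_seq \<D> b" unfolding SD_def by simp
      from ods_leave[OF this] obtain b' where b': "b' < b" "z \<notin> deriv_step \<D> (opt_deriv_seq \<D> b')"
        by blast
      have b'm: "b' < \<mu>" using b' bm by simp
      have lt: "\<phi> a b' < \<phi> a b" using m2[OF an b'(1) bm] .
      have zq: "z \<in> deriv_step \<Q> (opt_deriv_seq \<Q> (\<phi> a b'))"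
        using subsetD[OF ods_step[where \<C>=\<Q>, OF lt]] z unfolding SQ_def by simp
      show "z \<in> deriv_step \<C> SC" using subsetD[OF IHb[OF b'(1) b'm] zq] b'(2) unfolding SC_def by simp
    qed
    have "deriv_step \<Q> SQ \<subseteq> deriv_step \<C> SC \<union> deriv_step \<D> SD"
    proof
      fix y assume y: "y \<in> deriv_step \<Q> SQ"
      show "y \<in> deriv_step \<C> SC \<union> deriv_step \<D> SD"
      proof (rule ccontr)
        assume n: "y \<notin> deriv_step \<C> SC \<union> deriv_step \<D> SD"
        have ySQ: "y \<in> SQ" using subsetD[OF step_sub y] .
        have ySC: "y \<in> SC"
        proof (rule ccontr)
          assume "y \<notin> SC"
          hence "y \<in> deriv_step \<D> SD" using subsetD[OF A] ySQ by simp
          thus False using n by simp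
        qed
        have ySD: "y \<in> SD"
        proof (rule ccontr)
          assume "y \<notin> SD"
          hence "y \<in> deriv_step \<C> SC" using subsetD[OF B] ySQ by simp
          thus False using n by simp
        qed
        have "y \<in> \<Union>{U. open U \<and> (\<exists>C\<in>\<C>. SC \<inter> U \<subseteq> C)}"
          using ySC n unfolding deriv_step_def by simp
        then obtain U C where U: "open U" "y \<in> U" "C \<in> \<C>" "SC \<inter> U \<subseteq> C" by auto
        have "y \<in> \<Union>{U. open U \<and> (\<exists>C\<in>\<D>. SD \<inter> U \<subseteq> C)}"
          using ySD n unfolding deriv_step_def by simp
        then obtain V D where V: "open V" "y \<in> V" "D \<in> \<D>" "SD \<inter> V \<subseteq> D" by auto
        define W where "W = U \<inter> V \<inter> - deriv_step \<D> SD \<inter> - deriv_step \<C> SC"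
        have cl1: "closed (deriv_step \<D> SD)" unfolding SD_def by (intro step_closed ods_closed)
        have cl2: "closed (deriv_step \<C> SC)" unfolding SC_def by (intro step_closed ods_closed)
        have "open W" unfolding W_def
          using U(1) V(1) cl1 cl2 by (intro open_Int open_Compl) auto
        moreover have "y \<in> W" unfolding W_def using U(2) V(2) n by simp
        moreover have "SQ \<inter> W \<subseteq> C \<inter> D"
        proof
          fix z assume z: "z \<in> SQ \<inter> W"
          hence zz: "z \<in> SQ" "z \<notin> deriv_step \<D> SD" "z \<notin> deriv_step \<C> SC" "z \<in> U" "z \<in> V"
            unfolding W_def by simp_all
          have "z \<in> SC"
          proof (rule ccontr)
            assume "z \<notin> SC"
            hence "z \<in> deriv_step \<D> SD" using subsetD[OF A] zz by simp
            thus False using zz by simp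
          qed
          moreover have "z \<in> SD"
          proof (rule ccontr)
            assume "z \<notin> SD"
            hence "z \<in> deriv_step \<C> SC" using subsetD[OF B] zz by simp
            thus False using zz by simp
          qed
          ultimately show "z \<in> C \<inter> D" using zz U(4) V(4) by auto
        qed
        moreover have "C \<inter> D \<in> \<Q>" using hQ U(3) V(3) by blast
        ultimately have "W \<in> {U. open U \<and> (\<exists>C\<in>\<Q>. SQ \<inter> U \<subseteq> C)}" by (auto intro!: bexI[of _ "C \<inter> D"])
        hence "y \<in> \<Union>{U. open U \<and> (\<exists>C\<in>\<Q>. SQ \<inter> U \<subseteq> C)}" using \<open>y \<in> W\<close> by (rule UnionI)
        hence "y \<notin> deriv_step \<Q> SQ" unfolding deriv_step_def by simp
        thus False using y by simp
      qed
    qed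
    thus ?case unfolding SQ_def SC_def SD_def .
  qed
  show ?case by (rule main[OF less.prems(2)])
qed

lemma main_from_phi:
  fixes \<phi> :: "'o::wellorder \<Rightarrow> 'o \<Rightarrow> 'o" and \<C> \<D> :: "'a::topological_space set set"
  assumes m1: "\<And>a a' b. a < a' \<Longrightarrow> a' < \<nu> \<Longrightarrow> b < \<mu> \<Longrightarrow> \<phi> a b < \<phi> a' b"
    and m2: "\<And>a b b'. a < \<nu> \<Longrightarrow> b < b' \<Longrightarrow> b' < \<mu> \<Longrightarrow> \<phi> a b < \<phi> a b'"
    and lt: "\<And>a b. a < \<nu> \<Longrightarrow> b < \<mu> \<Longrightarrow> \<phi> a b < \<rho>"
  shows "opt_deriv_seq {C \<inter> D | C D. C \<in> \<C> \<and> D \<in> \<D>} \<rho>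
           \<subseteq> opt_deriv_seq \<C> \<nu> \<union> opt_deriv_seq \<D> \<mu>"
proof
  define \<Q> where "\<Q> = {C \<inter> D | C D. C \<in> \<C> \<and> D \<in> \<D>}"
  have hQ: "\<And>C D. C \<in> \<C> \<Longrightarrow> D \<in> \<D> \<Longrightarrow> C \<inter> D \<in> \<Q>" unfolding \<Q>_def by blast
  fix x assume x: "x \<in> opt_deriv_seq {C \<inter> D | C D. C \<in> \<C> \<and> D \<in> \<D>} \<rho>"
  hence x': "x \<in> opt_deriv_seq \<Q> \<rho>" unfolding \<Q>_def .
  show "x \<in> opt_deriv_seq \<C> \<nu> \<union> opt_deriv_seq \<D> \<mu>"
  proof (rule ccontr)
    assume "x \<notin> opt_deriv_seq \<C> \<nu> \<union> opt_deriv_seq \<D> \<mu>"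
    hence n1: "x \<notin> opt_deriv_seq \<C> \<nu>" and n2: "x \<notin> opt_deriv_seq \<D> \<mu>" by auto
    obtain a where a: "a < \<nu>" "x \<notin> deriv_step \<C> (opt_deriv_seq \<C> a)" using ods_leave[OF n1] by blast
    obtain b where b: "b < \<mu>" "x \<notin> deriv_step \<D> (opt_deriv_seq \<D> b)" using ods_leave[OF n2] by blast
    have "x \<in> deriv_step \<Q> (opt_deriv_seq \<Q> (\<phi> a b))"
      using subsetD[OF ods_step[where \<C>=\<Q>, OF lt[OF a(1) b(1)]] x'] .
    from subsetD[OF claim[where \<phi>=\<phi> and \<nu>=\<nu> and \<mu>=\<mu> and \<C>=\<C> and \<D>=\<D> and \<Q>=\<Q>, OF m1 m2 hQ a(1) b(1)] this]
    show False using a(2) b(2) by simp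
  qed
qed


theorem mainTheorem16:
  fixes \<C> \<D> :: "'a::metric_space set set"
    and \<nu> \<mu> \<rho> :: "'o::wellorder"
  assumes "compact (UNIV :: 'a set)"
    and "is_natural_sum \<nu> \<mu> \<rho>"
  shows "opt_deriv_seq {C \<inter> D | C D. C \<in> \<C> \<and> D \<in> \<D>} \<rho>
           \<subseteq> opt_deriv_seq \<C> \<nu> \<union> opt_deriv_seq \<D> \<mu>"
proof -
  from phi_exists[OF assms(2)] obtain \<phi> where
    p1: "\<forall>a a' b. a < a' \<longrightarrow> a' < \<nu> \<longrightarrow> b < \<mu> \<longrightarrow> \<phi> a b < \<phi> a' b" and
    p2: "\<forall>a b b'. a < \<nu> \<longrightarrow> b < b' \<longrightarrow> b' < \<mu> \<longrightarrow> \<phi> a b < \<phi> a b'" and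
    p3: "\<forall>a b. a < \<nu> \<longrightarrow> b < \<mu> \<longrightarrow> \<phi> a b < \<rho>"
    by blast
  show ?thesis
  proof (rule main_from_phi[where \<phi>=\<phi>])
    fix a a' b assume "a < a'" "a' < \<nu>" "b < \<mu>"
    thus "\<phi> a b < \<phi> a' b" using p1 by simp
  next
    fix a b b' assume "a < \<nu>" "b < b'" "b' < \<mu>"
    thus "\<phi> a b < \<phi> a b'" using p2 by simp
  next
    fix a b assume "a < \<nu>" "b < \<mu>"
    thus "\<phi> a b < \<rho>" using p3 by simp
  qed
qed

end
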